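(* There is an absolute constant $C>0$ such that the following holds. Let $A$ be a real $n\times n$ matrix, let $0<q\le n$, and let $Q$ be a random subset of $\{1,\dots,n\}$ in which each element is included independently with probability $q/n$. Then $$\mathbb E\,\|A|_{Q\times Q}\|_C\ \le\ C\Bigl(\Bigl(\frac qn\Bigr)^2\|A-D(A)\|_C+\frac qn\,\|D(A)\|_C+\Bigl(\frac qn\Bigr)^{3/2}\bigl(\|A\|_{\rm Col}+\|A^T\|_{\rm Col}\bigr)\Bigr).$$
   Context: The cut norm of a matrix $B=(B_{ij})$ is $\|B\|_C=\max_{I,J}\bigl|\sum_{i\in I,j\in J}B_{ij}\bigr|$, the maximum over all subsets $I$ of row indices and $J$ of column indices. $A|_{Q\times Q}=(A_{ij})_{i,j\in Q}$ is the principal submatrix on $Q$ (its cut norm is $0$ if $Q=\emptyset$). $D(A)$ is the diagonal part of $A$ (the matrix with the same diagonal as $A$ and zeros off the diagonal). $\|A\|_{\rm Col}$ is the sum of the Euclidean lengths of the columns of $A$. *)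

theory Defs
  imports Complex_Main
begin

text \<open>Real n x n matrices are represented as functions nat => nat => real,
  with row/column indices ranging over the finite index set {1..n}.\<close>

text \<open>For S = {} this is 0.  Applied to S = Q it is the cut norm of A restricted to Q x Q.\<close>
definition cut_norm :: "nat set \<Rightarrow> (nat \<Rightarrow> nat \<Rightarrow> real) \<Rightarrow> real" where
  "cut_norm S B = Max {\<bar>\<Sum>i\<in>I. \<Sum>j\<in>J. B i j\<bar> | I J. I \<subseteq> S \<and> J \<subseteq> S}"

definition diag_part :: "(nat \<Rightarrow> nat \<Rightarrow> real) \<Rightarrow> (nat \<Rightarrow> nat \<Rightarrow> real)" where
  "diag_part A = (\<lambda>i j. if i = j then A i j else 0)"

definition transp_mat :: "(nat \<Rightarrow> nat \<Rightarrow> real) \<Rightarrow> (nat \<Rightarrow> nat \<Rightarrow> real)" where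
  "transp_mat A = (\<lambda>i j. A j i)"

definition col_norm :: "nat \<Rightarrow> (nat \<Rightarrow> nat \<Rightarrow> real) \<Rightarrow> real" where
  "col_norm n A = (\<Sum>j\<in>{1..n}. sqrt (\<Sum>i\<in>{1..n}. (A i j)\<^sup>2))"

definition random_subset_expect :: "nat \<Rightarrow> real \<Rightarrow> (nat set \<Rightarrow> real) \<Rightarrow> real" where
  "random_subset_expect n p f =
     (\<Sum>Q\<in>Pow {1..n}. p ^ card Q * (1 - p) ^ (n - card Q) * f Q)"

end

theory Submission
  imports Defs
begin


definition EE :: "nat set \<Rightarrow> real \<Rightarrow> (nat set \<Rightarrow> real) \<Rightarrow> real" where
  "EE X p f = (\<Sum>Q\<in>Pow X. p ^ card Q * (1 - p) ^ (card X - card Q) * f Q)"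

lemma EE_empty: "EE {} p f = f {}"
  by (simp add: EE_def)

lemma EE_insert:
  assumes "finite X" "a \<notin> X"
  shows "EE (insert a X) p f = p * EE X p (\<lambda>Q. f (insert a Q)) + (1-p) * EE X p f"
proof -
  have inj: "inj_on (insert a) (Pow X)" using assms(2)
    unfolding inj_on_def by (metis Pow_iff insert_absorb insert_ident subsetD)
  have disj: "Pow X \<inter> insert a ` Pow X = {}" using assms(2) by auto
  have fin: "finite (Pow X)" using assms by simp
  have cX: "card (insert a X) = Suc (card X)" using assms by simp
  have s1: "(\<Sum>Q\<in>insert a ` Pow X. p ^ card Q * (1 - p) ^ (card (insert a X) - card Q) * f Q)
      = (\<Sum>Q\<in>Pow X. p * (p ^ card Q * (1 - p) ^ (card X - card Q) * f (insert a Q)))"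
    apply (subst sum.reindex[OF inj])
    apply (rule sum.cong[OF refl])
    using assms by (auto simp: cX card_insert_if finite_subset subset_iff)
  have s2: "(\<Sum>Q\<in>Pow X. p ^ card Q * (1 - p) ^ (card (insert a X) - card Q) * f Q)
      = (\<Sum>Q\<in>Pow X. (1-p) * (p ^ card Q * (1 - p) ^ (card X - card Q) * f Q))"
  proof (rule sum.cong[OF refl])
    fix Q assume "Q \<in> Pow X"
    then have "card Q \<le> card X" using assms(1) by (simp add: card_mono)
    then have "card (insert a X) - card Q = Suc (card X - card Q)" using cX by simp
    then show "p ^ card Q * (1 - p) ^ (card (insert a X) - card Q) * f Q
      = (1-p) * (p ^ card Q * (1 - p) ^ (card X - card Q) * f Q)" by simp
  qed
  show ?thesis
    unfolding EE_def Pow_insert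
    apply (subst sum.union_disjoint)
    using fin disj apply auto[3]
    unfolding s1 s2 sum_distrib_left[symmetric] by simp
qed

lemma EE_cong: "(\<And>Q. Q \<subseteq> X \<Longrightarrow> f Q = g Q) \<Longrightarrow> EE X p f = EE X p g"
  unfolding EE_def by (rule sum.cong) auto

lemma EE_add: "EE X p (\<lambda>Q. f Q + g Q) = EE X p f + EE X p g"
  unfolding EE_def by (simp add: algebra_simps sum.distrib)

lemma EE_diff: "EE X p (\<lambda>Q. f Q - g Q) = EE X p f - EE X p g"
  unfolding EE_def by (simp add: algebra_simps sum_subtractf)

lemma EE_cmult: "EE X p (\<lambda>Q. c * f Q) = c * EE X p f"
  unfolding EE_def by (simp add: algebra_simps sum_distrib_left)

lemma EE_sum: "EE X p (\<lambda>Q. \<Sum>k\<in>K. f k Q) = (\<Sum>k\<in>K. EE X p (f k))"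
  unfolding EE_def by (simp add: sum_distrib_left sum.swap[of _ "Pow X"])

lemma EE_swap: "EE X p (\<lambda>Q. EE Y r (\<lambda>S. f Q S)) = EE Y r (\<lambda>S. EE X p (\<lambda>Q. f Q S))"
  unfolding EE_def by (simp add: sum_distrib_left sum.swap[of _ "Pow X"] mult.assoc mult.left_commute)

lemma EE_const: "finite X \<Longrightarrow> EE X p (\<lambda>_. c) = c"
proof (induction X rule: finite_induct)
  case empty then show ?case by (simp add: EE_empty)
next
  case (insert a X) then show ?case by (simp add: EE_insert algebra_simps)
qed

lemma EE_affine: "finite X \<Longrightarrow> EE X p (\<lambda>Q. a * g Q + b) = a * EE X p g + b"
  by (simp add: EE_add EE_cmult EE_const)

lemma EE_mono:
  assumes "0 \<le> p" "p \<le> 1" "\<And>Q. Q \<subseteq> X \<Longrightarrow> f Q \<le> g Q"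
  shows "EE X p f \<le> EE X p g"
  unfolding EE_def
  apply (rule sum_mono)
  apply (rule mult_left_mono)
  using assms by auto

lemma EE_nonneg:
  assumes "0 \<le> p" "p \<le> 1" "\<And>Q. Q \<subseteq> X \<Longrightarrow> 0 \<le> f Q"
  shows "0 \<le> EE X p f"
  using EE_mono[OF assms(1,2), of X "\<lambda>_. 0" f] assms(3) by (simp add: EE_def)

lemma EE_abs:
  assumes "0 \<le> p" "p \<le> 1"
  shows "\<bar>EE X p f\<bar> \<le> EE X p (\<lambda>Q. \<bar>f Q\<bar>)"
  unfolding EE_def
  apply (rule order.trans[OF sum_abs])
  apply (rule sum_mono)
  using assms by (simp add: abs_mult)

lemma EE_union:
  assumes "finite A" "finite B" "A \<inter> B = {}"
  shows "EE (A \<union> B) p f = EE A p (\<lambda>Q1. EE B p (\<lambda>Q2. f (Q1 \<union> Q2)))"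
  using assms
proof (induction A arbitrary: f rule: finite_induct)
  case empty then show ?case by (simp add: EE_empty)
next
  case (insert a A)
  have "EE (insert a A \<union> B) p f = EE (insert a (A \<union> B)) p f" by simp
  also have "\<dots> = p * EE (A \<union> B) p (\<lambda>Q. f (insert a Q)) + (1-p) * EE (A \<union> B) p f"
    using insert by (intro EE_insert) auto
  also have "\<dots> = p * EE A p (\<lambda>Q1. EE B p (\<lambda>Q2. f (insert a (Q1 \<union> Q2)))) + (1-p) * EE A p (\<lambda>Q1. EE B p (\<lambda>Q2. f (Q1 \<union> Q2)))"
    using insert by simp
  also have "\<dots> = EE (insert a A) p (\<lambda>Q1. EE B p (\<lambda>Q2. f (Q1 \<union> Q2)))"
    using insert by (simp add: EE_insert)
  finally show ?case .
qed

lemma EE_sum_card: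
  assumes "finite X"
  shows "EE X p (\<lambda>Q. \<Sum>j\<in>Q. c j) = p * (\<Sum>j\<in>X. c j)"
  using assms
proof (induction X rule: finite_induct)
  case empty then show ?case by (simp add: EE_empty)
next
  case (insert a X)
  have "EE X p (\<lambda>Q. \<Sum>j\<in>insert a Q. c j) = EE X p (\<lambda>Q. c a + (\<Sum>j\<in>Q. c j))"
  proof (rule EE_cong)
    fix Q assume "Q \<subseteq> X"
    then have "finite Q" "a \<notin> Q" using insert finite_subset by auto
    then show "(\<Sum>j\<in>insert a Q. c j) = c a + (\<Sum>j\<in>Q. c j)" by simp
  qed
  then show ?case using insert by (simp add: EE_insert EE_add EE_const algebra_simps)
qed

lemma EE2_insert:
  assumes "finite X" "a \<notin> X"
  shows "EE (insert a X) p (\<lambda>Q. EE (insert a X) p (\<lambda>Q'. f Q Q')) =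
    p*p*EE X p (\<lambda>Q. EE X p (\<lambda>Q'. f (insert a Q) (insert a Q')))
  + p*(1-p)*EE X p (\<lambda>Q. EE X p (\<lambda>Q'. f (insert a Q) Q'))
  + (1-p)*p*EE X p (\<lambda>Q. EE X p (\<lambda>Q'. f Q (insert a Q')))
  + (1-p)*(1-p)*EE X p (\<lambda>Q. EE X p (\<lambda>Q'. f Q Q'))"
proof -
  have h: "\<And>g. EE (insert a X) p g = p * EE X p (\<lambda>Q. g (insert a Q)) + (1-p) * EE X p g"
    using assms by (rule EE_insert)
  show ?thesis by (simp only: h EE_add EE_cmult) (simp add: algebra_simps)
qed



definition smax :: "'j set \<Rightarrow> ('j \<Rightarrow> real) \<Rightarrow> real" where
  "smax S f = Max (f ` S)"

lemma smax_ge: "finite S \<Longrightarrow> J \<in> S \<Longrightarrow> f J \<le> smax S f"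
  unfolding smax_def by auto

lemma smax_obtain: "finite S \<Longrightarrow> S \<noteq> {} \<Longrightarrow> \<exists>J\<in>S. smax S f = f J"
  unfolding smax_def by (metis (mono_tags, lifting) Max_in empty_is_image finite_imageI imageE)

lemma smax_le: "finite S \<Longrightarrow> S \<noteq> {} \<Longrightarrow> (\<And>J. J \<in> S \<Longrightarrow> f J \<le> c) \<Longrightarrow> smax S f \<le> c"
  unfolding smax_def by auto

lemma smax_cong: "(\<And>J. J \<in> S \<Longrightarrow> f J = g J) \<Longrightarrow> smax S f = smax S g"
  unfolding smax_def by (metis image_cong)

lemma smax_add_le: "finite S \<Longrightarrow> S \<noteq> {} \<Longrightarrow> smax S (\<lambda>J. f J + g J) \<le> smax S f + smax S g"
  by (rule smax_le) (auto intro: add_mono smax_ge)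

lemma one_coord:
  fixes v s :: "'j \<Rightarrow> real"
  assumes S: "finite S" "S \<noteq> {}" and p: "0 \<le> p" "p \<le> 1"
    and lip: "\<And>x y. \<bar>\<phi> x - \<phi> y\<bar> \<le> \<bar>x - y\<bar>"
  shows "p * smax S (\<lambda>J. v J + (1-p) * \<phi> (s J)) + (1-p) * smax S (\<lambda>J. v J - p * \<phi> (s J))
    \<le> p*p*smax S v + p*(1-p)*smax S (\<lambda>J. v J + s J) + (1-p)*p*smax S (\<lambda>J. v J - s J) + (1-p)*(1-p)*smax S v"
proof -
  obtain J1 where J1: "J1 \<in> S" "smax S (\<lambda>J. v J + (1-p) * \<phi> (s J)) = v J1 + (1-p) * \<phi> (s J1)"
    using smax_obtain[OF S] by blast
  obtain J2 where J2: "J2 \<in> S" "smax S (\<lambda>J. v J - p * \<phi> (s J)) = v J2 - p * \<phi> (s J2)"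
    using smax_obtain[OF S] by blast
  let ?M = "smax S v"
  have v1: "v J1 \<le> ?M" and v2: "v J2 \<le> ?M" using J1 J2 S by (auto intro: smax_ge)
  have key: "v J1 + v J2 + \<bar>s J1 - s J2\<bar> \<le> smax S (\<lambda>J. v J + s J) + smax S (\<lambda>J. v J - s J)"
  proof (cases "s J1 \<ge> s J2")
    case True
    have "v J1 + s J1 \<le> smax S (\<lambda>J. v J + s J)" "v J2 - s J2 \<le> smax S (\<lambda>J. v J - s J)"
      using J1 J2 S by (auto intro: smax_ge[where f="\<lambda>J. v J + s J"] smax_ge[where f="\<lambda>J. v J - s J"])
    then show ?thesis using True by linarith
  next
    case False
    have "v J2 + s J2 \<le> smax S (\<lambda>J. v J + s J)" "v J1 - s J1 \<le> smax S (\<lambda>J. v J - s J)"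
      using J1 J2 S by (auto intro: smax_ge[where f="\<lambda>J. v J + s J"] smax_ge[where f="\<lambda>J. v J - s J"])
    then show ?thesis using False by linarith
  qed
  have q: "0 \<le> p*(1-p)" "0 \<le> p*p" "0 \<le> (1-p)*(1-p)" using p by auto
  have lhs: "p * smax S (\<lambda>J. v J + (1-p) * \<phi> (s J)) + (1-p) * smax S (\<lambda>J. v J - p * \<phi> (s J))
     = p*p*v J1 + (1-p)*(1-p)*v J2 + p*(1-p)*(v J1 + v J2 + (\<phi> (s J1) - \<phi> (s J2)))"
    unfolding J1 J2 by (simp add: algebra_simps)
  have "\<phi> (s J1) - \<phi> (s J2) \<le> \<bar>s J1 - s J2\<bar>" using lip[of "s J1" "s J2"] by linarith
  then have "p*(1-p)*(v J1 + v J2 + (\<phi> (s J1) - \<phi> (s J2))) \<le> p*(1-p)*(smax S (\<lambda>J. v J + s J) + smax S (\<lambda>J. v J - s J))"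
    using key q by (intro mult_left_mono) auto
  moreover have "p*p*v J1 \<le> p*p*?M" using v1 q by (intro mult_left_mono) auto
  moreover have "(1-p)*(1-p)*v J2 \<le> (1-p)*(1-p)*?M" using v2 q by (intro mult_left_mono) auto
  ultimately show ?thesis unfolding lhs by (simp add: algebra_simps)
qed

lemma sum_ins_cong:
  assumes "finite X" "a \<notin> X"
  shows "(\<Sum>i\<in>X. h (i \<in> insert a Q) i) = (\<Sum>i\<in>X. h (i \<in> Q) i)"
proof (intro sum.cong refl)
  fix x assume "x \<in> X"
  then have "x \<noteq> a" using assms by auto
  then show "h (x \<in> insert a Q) x = h (x \<in> Q) x" by simp
qed

lemma contraction:
  fixes u :: "'j \<Rightarrow> real" and t :: "'j \<Rightarrow> nat \<Rightarrow> real"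
  assumes "finite X" and S: "finite S" "S \<noteq> {}" and p: "0 \<le> p" "p \<le> 1"
    and lip: "\<And>x y. \<bar>\<phi> x - \<phi> y\<bar> \<le> \<bar>x - y\<bar>"
  shows "EE X p (\<lambda>Q. smax S (\<lambda>J. u J + (\<Sum>i\<in>X. (of_bool (i\<in>Q) - p) * \<phi> (t J i))))
    \<le> EE X p (\<lambda>Q. EE X p (\<lambda>Q'. smax S (\<lambda>J. u J + (\<Sum>i\<in>X. (of_bool (i\<in>Q) - of_bool (i\<in>Q')) * t J i))))"
  using assms(1)
proof (induction X arbitrary: u rule: finite_induct)
  case empty then show ?case by (simp add: EE_empty)
next
  case (insert a X)
  define W where "W Q Q' J = (\<Sum>i\<in>X. (of_bool (i\<in>Q) - of_bool (i\<in>Q')) * t J i)" for Q Q' J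
  define u1 where "u1 J = u J + (1-p) * \<phi> (t J a)" for J
  define u2 where "u2 J = u J - p * \<phi> (t J a)" for J
  have sw0: "(\<Sum>i\<in>X. (of_bool (i\<in>insert a Q) - p) * \<phi> (t J i)) = (\<Sum>i\<in>X. (of_bool (i\<in>Q) - p) * \<phi> (t J i))" for Q J
    by (rule sum_ins_cong[OF insert(1,2)])
  have r1: "EE X p (\<lambda>Q. smax S (\<lambda>J. u J + (\<Sum>i\<in>insert a X. (of_bool (i\<in>insert a Q) - p) * \<phi> (t J i))))
     = EE X p (\<lambda>Q. smax S (\<lambda>J. u1 J + (\<Sum>i\<in>X. (of_bool (i\<in>Q) - p) * \<phi> (t J i))))"
    using insert by (intro EE_cong smax_cong) (simp only: sum.insert[OF insert(1,2)] sw0, simp add: u1_def)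
  have r2: "EE X p (\<lambda>Q. smax S (\<lambda>J. u J + (\<Sum>i\<in>insert a X. (of_bool (i\<in>Q) - p) * \<phi> (t J i))))
     = EE X p (\<lambda>Q. smax S (\<lambda>J. u2 J + (\<Sum>i\<in>X. (of_bool (i\<in>Q) - p) * \<phi> (t J i))))"
    using insert by (intro EE_cong smax_cong) (auto simp: u2_def)
  have "EE (insert a X) p (\<lambda>Q. smax S (\<lambda>J. u J + (\<Sum>i\<in>insert a X. (of_bool (i\<in>Q) - p) * \<phi> (t J i))))
      = p * EE X p (\<lambda>Q. smax S (\<lambda>J. u1 J + (\<Sum>i\<in>X. (of_bool (i\<in>Q) - p) * \<phi> (t J i))))
      + (1-p) * EE X p (\<lambda>Q. smax S (\<lambda>J. u2 J + (\<Sum>i\<in>X. (of_bool (i\<in>Q) - p) * \<phi> (t J i))))"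
    by (simp only: EE_insert[OF insert(1,2)] r1 r2)
  also have "\<dots> \<le> p * EE X p (\<lambda>Q. EE X p (\<lambda>Q'. smax S (\<lambda>J. u1 J + W Q Q' J)))
      + (1-p) * EE X p (\<lambda>Q. EE X p (\<lambda>Q'. smax S (\<lambda>J. u2 J + W Q Q' J)))"
    unfolding W_def using p by (intro add_mono mult_left_mono insert.IH) auto
  also have "\<dots> = EE X p (\<lambda>Q. EE X p (\<lambda>Q'. p * smax S (\<lambda>J. (u J + W Q Q' J) + (1-p) * \<phi> (t J a))
       + (1-p) * smax S (\<lambda>J. (u J + W Q Q' J) - p * \<phi> (t J a))))"
  proof -
    have a1: "smax S (\<lambda>J. u1 J + W Q Q' J) = smax S (\<lambda>J. (u J + W Q Q' J) + (1-p) * \<phi> (t J a))" for Q Q'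
      by (rule smax_cong) (simp add: u1_def algebra_simps)
    have a2: "smax S (\<lambda>J. u2 J + W Q Q' J) = smax S (\<lambda>J. (u J + W Q Q' J) - p * \<phi> (t J a))" for Q Q'
      by (rule smax_cong) (simp add: u2_def algebra_simps)
    show ?thesis by (simp only: a1 a2 EE_add EE_cmult)
  qed
  also have "\<dots> \<le> EE X p (\<lambda>Q. EE X p (\<lambda>Q'.
      p*p*smax S (\<lambda>J. u J + W Q Q' J) + p*(1-p)*smax S (\<lambda>J. (u J + W Q Q' J) + t J a)
      + (1-p)*p*smax S (\<lambda>J. (u J + W Q Q' J) - t J a) + (1-p)*(1-p)*smax S (\<lambda>J. u J + W Q Q' J)))"
    using p by (intro EE_mono one_coord[OF S p lip]) auto
  also have "\<dots> = EE (insert a X) p (\<lambda>Q. EE (insert a X) p (\<lambda>Q'. smax S (\<lambda>J. u J + (\<Sum>i\<in>insert a X. (of_bool (i\<in>Q) - of_bool (i\<in>Q')) * t J i))))"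
  proof -
    have swa: "(\<Sum>i\<in>X. (of_bool (i\<in>insert a Q) - of_bool (i\<in>Q')) * t J i) = (\<Sum>i\<in>X. (of_bool (i\<in>Q) - of_bool (i\<in>Q')) * t J i)" for Q Q' J
      by (rule sum_ins_cong[OF insert(1,2), where h="\<lambda>b i. (of_bool b - of_bool (i\<in>Q')) * t J i"])
    have swb: "(\<Sum>i\<in>X. (of_bool (i\<in>Q) - of_bool (i\<in>insert a Q')) * t J i) = (\<Sum>i\<in>X. (of_bool (i\<in>Q) - of_bool (i\<in>Q')) * t J i)" for Q Q' J
      by (rule sum_ins_cong[OF insert(1,2), where h="\<lambda>b i. (of_bool (i\<in>Q) - of_bool b) * t J i"])
    note sw = swa swb
    have e1: "EE X p (\<lambda>Q. EE X p (\<lambda>Q'. smax S (\<lambda>J. u J + (\<Sum>i\<in>insert a X. (of_bool (i\<in>insert a Q) - of_bool (i\<in>insert a Q')) * t J i))))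
      = EE X p (\<lambda>Q. EE X p (\<lambda>Q'. smax S (\<lambda>J. u J + W Q Q' J)))"
      using insert unfolding W_def by (intro EE_cong smax_cong) (simp only: sum.insert[OF insert(1,2)] sw, simp)
    have e2: "EE X p (\<lambda>Q. EE X p (\<lambda>Q'. smax S (\<lambda>J. u J + (\<Sum>i\<in>insert a X. (of_bool (i\<in>insert a Q) - of_bool (i\<in>Q')) * t J i))))
      = EE X p (\<lambda>Q. EE X p (\<lambda>Q'. smax S (\<lambda>J. (u J + W Q Q' J) + t J a)))"
      using insert unfolding W_def by (intro EE_cong smax_cong) (simp only: sum.insert[OF insert(1,2)] sw, auto)
    have e3: "EE X p (\<lambda>Q. EE X p (\<lambda>Q'. smax S (\<lambda>J. u J + (\<Sum>i\<in>insert a X. (of_bool (i\<in>Q) - of_bool (i\<in>insert a Q')) * t J i))))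
      = EE X p (\<lambda>Q. EE X p (\<lambda>Q'. smax S (\<lambda>J. (u J + W Q Q' J) - t J a)))"
      using insert unfolding W_def by (intro EE_cong smax_cong) (simp only: sum.insert[OF insert(1,2)] sw, auto)
    have e4: "EE X p (\<lambda>Q. EE X p (\<lambda>Q'. smax S (\<lambda>J. u J + (\<Sum>i\<in>insert a X. (of_bool (i\<in>Q) - of_bool (i\<in>Q')) * t J i))))
      = EE X p (\<lambda>Q. EE X p (\<lambda>Q'. smax S (\<lambda>J. u J + W Q Q' J)))"
      using insert unfolding W_def by (intro EE_cong smax_cong) auto
    show ?thesis
      unfolding EE2_insert[OF insert(1,2)] e1 e2 e3 e4
      by (simp add: EE_add EE_cmult)
  qed
  finally show ?case .
qed



lemma variance:
  assumes "finite X"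
  shows "EE X p (\<lambda>Q. EE X p (\<lambda>Q'. (c + (\<Sum>i\<in>X. (of_bool (i\<in>Q) - of_bool (i\<in>Q')) * m i))\<^sup>2))
    = c\<^sup>2 + 2*p*(1-p)*(\<Sum>i\<in>X. (m i)\<^sup>2)"
  using assms
proof (induction X arbitrary: c rule: finite_induct)
  case empty then show ?case by (simp add: EE_empty)
next
  case (insert a X)
  define W where "W Q Q' = (\<Sum>i\<in>X. (of_bool (i\<in>Q) - of_bool (i\<in>Q')) * m i)" for Q Q'
  have swa: "(\<Sum>i\<in>X. (of_bool (i\<in>insert a Q) - of_bool (i\<in>Q')) * m i) = (\<Sum>i\<in>X. (of_bool (i\<in>Q) - of_bool (i\<in>Q')) * m i)" for Q Q'
    by (rule sum_ins_cong[OF insert(1,2), where h="\<lambda>b i. (of_bool b - of_bool (i\<in>Q')) * m i"])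
  have swb: "(\<Sum>i\<in>X. (of_bool (i\<in>Q) - of_bool (i\<in>insert a Q')) * m i) = (\<Sum>i\<in>X. (of_bool (i\<in>Q) - of_bool (i\<in>Q')) * m i)" for Q Q'
    by (rule sum_ins_cong[OF insert(1,2), where h="\<lambda>b i. (of_bool (i\<in>Q) - of_bool b) * m i"])
  note sw = swa swb
  have IH: "EE X p (\<lambda>Q. EE X p (\<lambda>Q'. (c' + W Q Q')\<^sup>2)) = c'\<^sup>2 + 2*p*(1-p)*(\<Sum>i\<in>X. (m i)\<^sup>2)" for c'
    unfolding W_def by (rule insert.IH)
  have e1: "EE X p (\<lambda>Q. EE X p (\<lambda>Q'. (c + (\<Sum>i\<in>insert a X. (of_bool (i\<in>insert a Q) - of_bool (i\<in>insert a Q')) * m i))\<^sup>2))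
      = EE X p (\<lambda>Q. EE X p (\<lambda>Q'. (c + W Q Q')\<^sup>2))"
    using insert unfolding W_def by (intro EE_cong) (simp only: sum.insert[OF insert(1,2)] sw, simp)
  have e2: "EE X p (\<lambda>Q. EE X p (\<lambda>Q'. (c + (\<Sum>i\<in>insert a X. (of_bool (i\<in>insert a Q) - of_bool (i\<in>Q')) * m i))\<^sup>2))
      = EE X p (\<lambda>Q. EE X p (\<lambda>Q'. ((c + m a) + W Q Q')\<^sup>2))"
    using insert unfolding W_def by (intro EE_cong) (simp only: sum.insert[OF insert(1,2)] sw, auto simp: add.assoc)
  have e3: "EE X p (\<lambda>Q. EE X p (\<lambda>Q'. (c + (\<Sum>i\<in>insert a X. (of_bool (i\<in>Q) - of_bool (i\<in>insert a Q')) * m i))\<^sup>2))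
      = EE X p (\<lambda>Q. EE X p (\<lambda>Q'. ((c - m a) + W Q Q')\<^sup>2))"
    using insert unfolding W_def by (intro EE_cong) (simp only: sum.insert[OF insert(1,2)] sw, auto simp: algebra_simps)
  have e4: "EE X p (\<lambda>Q. EE X p (\<lambda>Q'. (c + (\<Sum>i\<in>insert a X. (of_bool (i\<in>Q) - of_bool (i\<in>Q')) * m i))\<^sup>2))
      = EE X p (\<lambda>Q. EE X p (\<lambda>Q'. (c + W Q Q')\<^sup>2))"
    using insert unfolding W_def by (intro EE_cong) auto
  show ?case
    unfolding EE2_insert[OF insert(1,2)] e1 e2 e3 e4 IH
    using insert by (simp add: algebra_simps power2_eq_square)
qed

lemma le_sqrt_aux:
  assumes "0 \<le> V" "\<And>c. c > 0 \<Longrightarrow> x \<le> (V / c + c) / 2"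
  shows "x \<le> sqrt V"
proof (cases "V > 0")
  case True
  have "x \<le> (V / sqrt V + sqrt V) / 2" using assms(2) True by simp
  also have "V / sqrt V = sqrt V" using True by (metis real_div_sqrt less_imp_le)
  finally show ?thesis by simp
next
  case False
  then have V: "V = 0" using assms(1) by simp
  show ?thesis
  proof (rule ccontr)
    assume "\<not> x \<le> sqrt V"
    then have "x > 0" using V by simp
    then show False using assms(2)[of x] V by simp
  qed
qed

lemma jensen2:
  assumes "finite X" "0 \<le> p" "p \<le> 1"
  shows "EE X p (\<lambda>Q. EE X p (\<lambda>Q'. \<bar>f Q Q'\<bar>)) \<le> sqrt (EE X p (\<lambda>Q. EE X p (\<lambda>Q'. (f Q Q')\<^sup>2)))"
proof (rule le_sqrt_aux)
  show "0 \<le> EE X p (\<lambda>Q. EE X p (\<lambda>Q'. (f Q Q')\<^sup>2))"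
    using assms by (intro EE_nonneg) auto
  fix c :: real assume c: "c > 0"
  have pt: "\<bar>x\<bar> \<le> (1/(2*c)) * x\<^sup>2 + c/2" for x :: real
  proof -
    have "0 \<le> (\<bar>x\<bar> - c)\<^sup>2" by simp
    then have "2*c*\<bar>x\<bar> \<le> x\<^sup>2 + c\<^sup>2" by (simp add: power2_eq_square algebra_simps)
    then show ?thesis using c by (simp add: field_simps power2_eq_square)
  qed
  have "EE X p (\<lambda>Q. EE X p (\<lambda>Q'. \<bar>f Q Q'\<bar>)) \<le> EE X p (\<lambda>Q. EE X p (\<lambda>Q'. (1/(2*c)) * (f Q Q')\<^sup>2 + c/2))"
    using assms pt by (intro EE_mono) auto
  also have "\<dots> = (1/(2*c)) * EE X p (\<lambda>Q. EE X p (\<lambda>Q'. (f Q Q')\<^sup>2)) + c/2"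
    by (simp only: EE_affine[OF assms(1)])
  also have "\<dots> = (EE X p (\<lambda>Q. EE X p (\<lambda>Q'. (f Q Q')\<^sup>2)) / c + c) / 2"
    by (simp add: field_simps)
  finally show "EE X p (\<lambda>Q. EE X p (\<lambda>Q'. \<bar>f Q Q'\<bar>)) \<le> (EE X p (\<lambda>Q. EE X p (\<lambda>Q'. (f Q Q')\<^sup>2)) / c + c) / 2" .
qed



definition cutr :: "nat set \<Rightarrow> nat set \<Rightarrow> (nat \<Rightarrow> nat \<Rightarrow> real) \<Rightarrow> real" where
  "cutr R T B = Max {\<bar>\<Sum>i\<in>I. \<Sum>j\<in>J. B i j\<bar> | I J. I \<subseteq> R \<and> J \<subseteq> T}"

lemma cut_norm_cutr: "cut_norm S B = cutr S S B"
  unfolding cut_norm_def cutr_def by simp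

lemma cutr_set: "{\<bar>\<Sum>i\<in>I. \<Sum>j\<in>J. B i j\<bar> | I J. I \<subseteq> R \<and> J \<subseteq> T}
   = (\<lambda>(I,J). \<bar>\<Sum>i\<in>I. \<Sum>j\<in>J. B i j\<bar>) ` (Pow R \<times> Pow T)"
  by auto

lemma cutr_ge:
  assumes "finite R" "finite T" "I \<subseteq> R" "J \<subseteq> T"
  shows "\<bar>\<Sum>i\<in>I. \<Sum>j\<in>J. B i j\<bar> \<le> cutr R T B"
  unfolding cutr_def cutr_set using assms by (intro Max_ge) auto

lemma cutr_le:
  assumes "finite R" "finite T" "\<And>I J. I \<subseteq> R \<Longrightarrow> J \<subseteq> T \<Longrightarrow> \<bar>\<Sum>i\<in>I. \<Sum>j\<in>J. B i j\<bar> \<le> c"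
  shows "cutr R T B \<le> c"
  unfolding cutr_def cutr_set using assms by (intro Max.boundedI) auto

lemma cutr_nonneg: "finite R \<Longrightarrow> finite T \<Longrightarrow> 0 \<le> cutr R T B"
  using cutr_ge[of R T "{}" "{}" B] by simp

lemma cutr_mono:
  assumes "finite R'" "finite T'" "R \<subseteq> R'" "T \<subseteq> T'"
  shows "cutr R T B \<le> cutr R' T' B"
proof (rule cutr_le)
  show "finite R" "finite T" using assms finite_subset by auto
  fix I J assume "I \<subseteq> R" "J \<subseteq> T"
  then show "\<bar>\<Sum>i\<in>I. \<Sum>j\<in>J. B i j\<bar> \<le> cutr R' T' B" using assms by (intro cutr_ge) auto
qed

lemma cutr_transp_le:
  assumes "finite R" "finite T"
  shows "cutr R T B \<le> cutr T R (\<lambda>i j. B j i)"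
proof (rule cutr_le[OF assms])
  fix I J assume "I \<subseteq> R" "J \<subseteq> T"
  then have "\<bar>\<Sum>j\<in>J. \<Sum>i\<in>I. B i j\<bar> \<le> cutr T R (\<lambda>i j. B j i)" using assms by (intro cutr_ge) auto
  then show "\<bar>\<Sum>i\<in>I. \<Sum>j\<in>J. B i j\<bar> \<le> cutr T R (\<lambda>i j. B j i)" by (metis sum.swap)
qed

lemma cutr_transp: "finite R \<Longrightarrow> finite T \<Longrightarrow> cutr R T B = cutr T R (\<lambda>i j. B j i)"
  using cutr_transp_le[of R T B] cutr_transp_le[of T R "\<lambda>i j. B j i"] by simp

lemma cutr_neg: "finite R \<Longrightarrow> finite T \<Longrightarrow> cutr R T (\<lambda>i j. - B i j) = cutr R T B"
  unfolding cutr_def by (simp add: sum_negf)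

lemma sum_of_bool_restrict:
  assumes "finite R" "Q \<subseteq> R"
  shows "(\<Sum>i\<in>R. of_bool (i\<in>Q) * f i) = (\<Sum>i\<in>Q. f i :: real)"
proof -
  have "(\<Sum>i\<in>R. of_bool (i\<in>Q) * f i) = (\<Sum>i\<in>R. if i \<in> Q then f i else 0)"
    by (intro sum.cong) auto
  also have "\<dots> = (\<Sum>i\<in>R \<inter> Q. f i)" using assms(1) by (simp add: sum.inter_restrict)
  also have "R \<inter> Q = Q" using assms(2) by auto
  finally show ?thesis .
qed

lemma one_sided_pos:
  assumes R: "finite R" and J0: "finite J0" and p: "0 \<le> p" "p \<le> 1"
  shows "EE R p (\<lambda>Q. smax (Pow J0) (\<lambda>J. \<Sum>i\<in>Q. max 0 (\<Sum>j\<in>J. M i j)))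
    \<le> p * cutr R J0 M + 2 * sqrt p * (\<Sum>j\<in>J0. sqrt (\<Sum>i\<in>R. (M i j)\<^sup>2))"
proof -
  define t where "t J i = (\<Sum>j\<in>J. M i j)" for J i
  define \<phi> :: "real \<Rightarrow> real" where "\<phi> x = max 0 x" for x
  have lip: "\<bar>\<phi> x - \<phi> y\<bar> \<le> \<bar>x - y\<bar>" for x y unfolding \<phi>_def by auto
  have S: "finite (Pow J0)" "Pow J0 \<noteq> {}" using J0 by auto
  have cut1: "(\<Sum>i\<in>R. \<phi> (t J i)) \<le> cutr R J0 M" if "J \<subseteq> J0" for J
  proof -
    have "(\<Sum>i\<in>R. \<phi> (t J i)) = (\<Sum>i\<in>R. if 0 \<le> t J i then t J i else 0)"
      unfolding \<phi>_def by (intro sum.cong) auto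
    also have "\<dots> = (\<Sum>i\<in>{i\<in>R. 0 \<le> t J i}. t J i)" using R by (simp add: sum.inter_filter)
    also have "\<dots> \<le> \<bar>\<Sum>i\<in>{i\<in>R. 0 \<le> t J i}. \<Sum>j\<in>J. M i j\<bar>" unfolding t_def by simp
    also have "\<dots> \<le> cutr R J0 M" using R J0 that by (intro cutr_ge) auto
    finally show ?thesis .
  qed
  define c where "c Q Q' j = (\<Sum>i\<in>R. (of_bool (i\<in>Q) - of_bool (i\<in>Q')) * M i j)" for Q Q' j
  have step1: "smax (Pow J0) (\<lambda>J. \<Sum>i\<in>Q. max 0 (\<Sum>j\<in>J. M i j))
     \<le> p * cutr R J0 M + smax (Pow J0) (\<lambda>J. 0 + (\<Sum>i\<in>R. (of_bool (i\<in>Q) - p) * \<phi> (t J i)))"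
    if "Q \<subseteq> R" for Q
  proof (rule smax_le[OF S])
    fix J assume J: "J \<in> Pow J0"
    have "(\<Sum>i\<in>Q. max 0 (\<Sum>j\<in>J. M i j)) = (\<Sum>i\<in>R. of_bool (i\<in>Q) * \<phi> (t J i))"
      unfolding \<phi>_def t_def by (rule sum_of_bool_restrict[OF R that, symmetric])
    also have "\<dots> = p * (\<Sum>i\<in>R. \<phi> (t J i)) + (\<Sum>i\<in>R. (of_bool (i\<in>Q) - p) * \<phi> (t J i))"
      by (simp add: sum_distrib_left sum.distrib[symmetric] algebra_simps)
    also have "\<dots> \<le> p * cutr R J0 M + smax (Pow J0) (\<lambda>J. 0 + (\<Sum>i\<in>R. (of_bool (i\<in>Q) - p) * \<phi> (t J i)))"
      using cut1 J p smax_ge[OF S(1) J, of "\<lambda>J. 0 + (\<Sum>i\<in>R. (of_bool (i\<in>Q) - p) * \<phi> (t J i))"]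
      by (intro add_mono mult_left_mono) auto
    finally show "(\<Sum>i\<in>Q. max 0 (\<Sum>j\<in>J. M i j)) \<le> \<dots>" .
  qed
  have step4: "smax (Pow J0) (\<lambda>J. 0 + (\<Sum>i\<in>R. (of_bool (i\<in>Q) - of_bool (i\<in>Q')) * t J i))
     \<le> (\<Sum>j\<in>J0. \<bar>c Q Q' j\<bar>)" for Q Q'
  proof (rule smax_le[OF S])
    fix J assume J: "J \<in> Pow J0"
    have "0 + (\<Sum>i\<in>R. (of_bool (i\<in>Q) - of_bool (i\<in>Q')) * t J i) = (\<Sum>j\<in>J. c Q Q' j)"
      unfolding t_def c_def by (simp add: sum_distrib_left sum.swap[of _ R])
    also have "\<dots> \<le> (\<Sum>j\<in>J. \<bar>c Q Q' j\<bar>)" by (intro sum_mono) auto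
    also have "\<dots> \<le> (\<Sum>j\<in>J0. \<bar>c Q Q' j\<bar>)" using J J0 by (intro sum_mono2) auto
    finally show "0 + (\<Sum>i\<in>R. (of_bool (i\<in>Q) - of_bool (i\<in>Q')) * t J i) \<le> (\<Sum>j\<in>J0. \<bar>c Q Q' j\<bar>)" .
  qed
  have step6: "EE R p (\<lambda>Q. EE R p (\<lambda>Q'. \<bar>c Q Q' j\<bar>)) \<le> 2 * sqrt p * sqrt (\<Sum>i\<in>R. (M i j)\<^sup>2)" for j
  proof -
    have var: "EE R p (\<lambda>Q. EE R p (\<lambda>Q'. (c Q Q' j)\<^sup>2)) = 2*p*(1-p)*(\<Sum>i\<in>R. (M i j)\<^sup>2)"
      using variance[OF R, of p 0 "\<lambda>i. M i j"] unfolding c_def by simp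
    have "EE R p (\<lambda>Q. EE R p (\<lambda>Q'. \<bar>c Q Q' j\<bar>)) \<le> sqrt (2*p*(1-p)*(\<Sum>i\<in>R. (M i j)\<^sup>2))"
      using jensen2[OF R p, of "\<lambda>Q Q'. c Q Q' j"] var by simp
    also have "\<dots> \<le> sqrt (4 * p * (\<Sum>i\<in>R. (M i j)\<^sup>2))"
    proof (rule real_sqrt_le_mono)
      have "0 \<le> (\<Sum>i\<in>R. (M i j)\<^sup>2)" by (intro sum_nonneg) auto
      moreover have "2*p*(1-p) \<le> 4 * p" using p by (simp add: algebra_simps)
      ultimately show "2*p*(1-p)*(\<Sum>i\<in>R. (M i j)\<^sup>2) \<le> 4 * p * (\<Sum>i\<in>R. (M i j)\<^sup>2)"
        by (intro mult_right_mono) auto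
    qed
    also have "\<dots> = 2 * sqrt p * sqrt (\<Sum>i\<in>R. (M i j)\<^sup>2)"
      by (simp add: real_sqrt_mult)
    finally show ?thesis .
  qed
  have "EE R p (\<lambda>Q. smax (Pow J0) (\<lambda>J. \<Sum>i\<in>Q. max 0 (\<Sum>j\<in>J. M i j)))
     \<le> EE R p (\<lambda>Q. p * cutr R J0 M + smax (Pow J0) (\<lambda>J. 0 + (\<Sum>i\<in>R. (of_bool (i\<in>Q) - p) * \<phi> (t J i))))"
    using p step1 by (intro EE_mono) auto
  also have "\<dots> = p * cutr R J0 M + EE R p (\<lambda>Q. smax (Pow J0) (\<lambda>J. 0 + (\<Sum>i\<in>R. (of_bool (i\<in>Q) - p) * \<phi> (t J i))))"
    by (simp only: EE_add EE_const[OF R])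
  also have "\<dots> \<le> p * cutr R J0 M + EE R p (\<lambda>Q. EE R p (\<lambda>Q'. smax (Pow J0) (\<lambda>J. 0 + (\<Sum>i\<in>R. (of_bool (i\<in>Q) - of_bool (i\<in>Q')) * t J i))))"
    using contraction[OF R S p lip, of "\<lambda>_. 0" t] by simp
  also have "\<dots> \<le> p * cutr R J0 M + EE R p (\<lambda>Q. EE R p (\<lambda>Q'. (\<Sum>j\<in>J0. \<bar>c Q Q' j\<bar>)))"
    using p step4 by (intro add_mono EE_mono) auto
  also have "EE R p (\<lambda>Q. EE R p (\<lambda>Q'. (\<Sum>j\<in>J0. \<bar>c Q Q' j\<bar>))) = (\<Sum>j\<in>J0. EE R p (\<lambda>Q. EE R p (\<lambda>Q'. \<bar>c Q Q' j\<bar>)))"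
    by (simp only: EE_sum)
  also have "\<dots> \<le> (\<Sum>j\<in>J0. 2 * sqrt p * sqrt (\<Sum>i\<in>R. (M i j)\<^sup>2))"
    using step6 by (intro sum_mono) auto
  also have "\<dots> = 2 * sqrt p * (\<Sum>j\<in>J0. sqrt (\<Sum>i\<in>R. (M i j)\<^sup>2))"
    by (simp add: sum_distrib_left)
  finally show ?thesis by simp
qed



lemma one_sided:
  assumes R: "finite R" and J0: "finite J0" and p: "0 \<le> p" "p \<le> 1"
  shows "EE R p (\<lambda>Q. cutr Q J0 M) \<le> 2 * p * cutr R J0 M + 4 * sqrt p * (\<Sum>j\<in>J0. sqrt (\<Sum>i\<in>R. (M i j)\<^sup>2))"
proof -
  define A :: "(nat \<Rightarrow> nat \<Rightarrow> real) \<Rightarrow> nat set \<Rightarrow> real" where "A N Q = smax (Pow J0) (\<lambda>J. \<Sum>i\<in>Q. max 0 (\<Sum>j\<in>J. N i j))" for N Q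
  have S: "finite (Pow J0)" "Pow J0 \<noteq> {}" using J0 by auto
  have Anonneg: "0 \<le> A N Q" for N Q
  proof -
    have "0 \<le> (\<Sum>i\<in>Q. max 0 (\<Sum>j\<in>{}. N i j))" by (intro sum_nonneg) auto
    also have "\<dots> \<le> A N Q" unfolding A_def using S by (intro smax_ge) auto
    finally show ?thesis .
  qed
  have pt: "cutr Q J0 M \<le> A M Q + A (\<lambda>i j. - M i j) Q" if Q: "Q \<subseteq> R" for Q
  proof (rule cutr_le)
    show "finite Q" using Q R finite_subset by auto
    show "finite J0" by fact
    fix I J assume I: "I \<subseteq> Q" and J: "J \<subseteq> J0"
    have fQ: "finite Q" using Q R finite_subset by auto
    have "(\<Sum>i\<in>I. \<Sum>j\<in>J. M i j) \<le> (\<Sum>i\<in>I. max 0 (\<Sum>j\<in>J. M i j))" by (intro sum_mono) auto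
    also have "\<dots> \<le> (\<Sum>i\<in>Q. max 0 (\<Sum>j\<in>J. M i j))" using I fQ by (intro sum_mono2) auto
    also have "\<dots> \<le> A M Q" unfolding A_def using S J by (intro smax_ge) auto
    finally have 1: "(\<Sum>i\<in>I. \<Sum>j\<in>J. M i j) \<le> A M Q" .
    have "- (\<Sum>i\<in>I. \<Sum>j\<in>J. M i j) = (\<Sum>i\<in>I. \<Sum>j\<in>J. - M i j)" by (simp add: sum_negf)
    also have "\<dots> \<le> (\<Sum>i\<in>I. max 0 (\<Sum>j\<in>J. - M i j))" by (intro sum_mono) auto
    also have "\<dots> \<le> (\<Sum>i\<in>Q. max 0 (\<Sum>j\<in>J. - M i j))" using I fQ by (intro sum_mono2) auto
    also have "\<dots> \<le> A (\<lambda>i j. - M i j) Q" unfolding A_def using S J by (intro smax_ge) auto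
    finally have 2: "- (\<Sum>i\<in>I. \<Sum>j\<in>J. M i j) \<le> A (\<lambda>i j. - M i j) Q" .
    show "\<bar>\<Sum>i\<in>I. \<Sum>j\<in>J. M i j\<bar> \<le> A M Q + A (\<lambda>i j. - M i j) Q"
      using 1 2 Anonneg[of M Q] Anonneg[of "\<lambda>i j. - M i j" Q] by linarith
  qed
  have "EE R p (\<lambda>Q. cutr Q J0 M) \<le> EE R p (\<lambda>Q. A M Q + A (\<lambda>i j. - M i j) Q)"
    using p pt by (intro EE_mono) auto
  also have "\<dots> = EE R p (A M) + EE R p (A (\<lambda>i j. - M i j))" by (rule EE_add)
  also have "\<dots> \<le> (p * cutr R J0 M + 2 * sqrt p * (\<Sum>j\<in>J0. sqrt (\<Sum>i\<in>R. (M i j)\<^sup>2)))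
       + (p * cutr R J0 (\<lambda>i j. - M i j) + 2 * sqrt p * (\<Sum>j\<in>J0. sqrt (\<Sum>i\<in>R. (- M i j)\<^sup>2)))"
    unfolding A_def by (intro add_mono one_sided_pos[OF R J0 p])
  also have "\<dots> = 2 * p * cutr R J0 M + 4 * sqrt p * (\<Sum>j\<in>J0. sqrt (\<Sum>i\<in>R. (M i j)\<^sup>2))"
    using cutr_neg[OF R J0, of M] by simp
  finally show ?thesis .
qed

lemma bipartite:
  assumes S: "finite S" and T: "finite T" and d: "S \<inter> T = {}" and p: "0 \<le> p" "p \<le> 1"
  shows "EE (S \<union> T) p (\<lambda>Q. cutr (Q \<inter> S) (Q \<inter> T) B) \<le> 4 * p\<^sup>2 * cutr S T B
    + 8 * (p * sqrt p) * (\<Sum>i\<in>S. sqrt (\<Sum>j\<in>T. (B i j)\<^sup>2)) + 4 * (p * sqrt p) * (\<Sum>j\<in>T. sqrt (\<Sum>i\<in>S. (B i j)\<^sup>2))"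
proof -
  define colS where "colS j = sqrt (\<Sum>i\<in>S. (B i j)\<^sup>2)" for j
  have "EE (S \<union> T) p (\<lambda>Q. cutr (Q \<inter> S) (Q \<inter> T) B) = EE S p (\<lambda>Q1. EE T p (\<lambda>Q2. cutr ((Q1 \<union> Q2) \<inter> S) ((Q1 \<union> Q2) \<inter> T) B))"
    by (rule EE_union[OF S T d])
  also have "\<dots> = EE S p (\<lambda>Q1. EE T p (\<lambda>Q2. cutr Q1 Q2 B))"
  proof (intro EE_cong)
    fix Q1 Q2 assume "Q1 \<subseteq> S" "Q2 \<subseteq> T"
    then have "(Q1 \<union> Q2) \<inter> S = Q1" "(Q1 \<union> Q2) \<inter> T = Q2" using d by auto
    then show "cutr ((Q1 \<union> Q2) \<inter> S) ((Q1 \<union> Q2) \<inter> T) B = cutr Q1 Q2 B" by simp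
  qed
  also have "\<dots> = EE T p (\<lambda>Q2. EE S p (\<lambda>Q1. cutr Q1 Q2 B))" by (rule EE_swap)
  also have "\<dots> \<le> EE T p (\<lambda>Q2. 2 * p * cutr S Q2 B + 4 * sqrt p * (\<Sum>j\<in>Q2. colS j))"
    unfolding colS_def using p T by (intro EE_mono one_sided[OF S _ p]) (auto intro: finite_subset)
  also have "\<dots> = 2 * p * EE T p (\<lambda>Q2. cutr S Q2 B) + 4 * sqrt p * (p * (\<Sum>j\<in>T. colS j))"
    by (simp only: EE_add EE_cmult EE_sum_card[OF T])
  finally have h1: "EE (S \<union> T) p (\<lambda>Q. cutr (Q \<inter> S) (Q \<inter> T) B) \<le> 2 * p * EE T p (\<lambda>Q2. cutr S Q2 B) + 4 * sqrt p * (p * (\<Sum>j\<in>T. colS j))" .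
  have "EE T p (\<lambda>Q2. cutr S Q2 B) = EE T p (\<lambda>Q2. cutr Q2 S (\<lambda>i j. B j i))"
    using S T by (intro EE_cong cutr_transp) (auto intro: finite_subset)
  also have "\<dots> \<le> 2 * p * cutr T S (\<lambda>i j. B j i) + 4 * sqrt p * (\<Sum>j\<in>S. sqrt (\<Sum>i\<in>T. (B j i)\<^sup>2))"
    by (rule one_sided[OF T S p])
  also have "cutr T S (\<lambda>i j. B j i) = cutr S T B" using cutr_transp[OF S T, of B] by simp
  finally have h2: "EE T p (\<lambda>Q2. cutr S Q2 B) \<le> 2 * p * cutr S T B + 4 * sqrt p * (\<Sum>j\<in>S. sqrt (\<Sum>i\<in>T. (B j i)\<^sup>2))" .
  have *: "EE (S \<union> T) p (\<lambda>Q. cutr (Q \<inter> S) (Q \<inter> T) B) \<le>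
     2 * p * (2 * p * cutr S T B + 4 * sqrt p * (\<Sum>j\<in>S. sqrt (\<Sum>i\<in>T. (B j i)\<^sup>2))) + 4 * sqrt p * (p * (\<Sum>j\<in>T. colS j))"
    using h1 h2 p by (smt (verit) mult_left_mono)
  then show ?thesis unfolding colS_def by (simp add: algebra_simps power2_eq_square)
qed

lemma prob_pair:
  assumes X: "finite X" and ij: "i \<in> X" "j \<in> X" "i \<noteq> j"
  shows "EE X p (\<lambda>S. of_bool (i \<in> S \<and> j \<notin> S)) = p * (1 - p)"
proof -
  have XX: "X = {i,j} \<union> (X - {i,j})" using ij by auto
  have "EE X p (\<lambda>S. of_bool (i \<in> S \<and> j \<notin> S)) = EE ({i,j} \<union> (X - {i,j})) p (\<lambda>S. of_bool (i \<in> S \<and> j \<notin> S))"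
    using XX by simp
  also have "\<dots> = EE {i,j} p (\<lambda>Q1. EE (X - {i,j}) p (\<lambda>Q2. of_bool (i \<in> Q1 \<union> Q2 \<and> j \<notin> Q1 \<union> Q2)))"
    using X by (intro EE_union) auto
  also have "\<dots> = EE {i,j} p (\<lambda>Q1. EE (X - {i,j}) p (\<lambda>Q2. of_bool (i \<in> Q1 \<and> j \<notin> Q1)))"
    by (intro EE_cong) auto
  also have "\<dots> = EE {i,j} p (\<lambda>Q1. of_bool (i \<in> Q1 \<and> j \<notin> Q1))"
    using X by (simp add: EE_const)
  also have "\<dots> = p * (1 - p)"
    using ij by (simp add: EE_insert EE_empty)
  finally show ?thesis .
qed



lemma decouple:
  assumes X: "finite X" and Q: "Q \<subseteq> X" and diag0: "\<And>i. B i i = 0"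
  shows "cutr Q Q B \<le> 4 * EE X (1/2) (\<lambda>S. cutr (S \<inter> Q) (Q - S) B)"
proof (rule cutr_le)
  show fQ: "finite Q" using X Q finite_subset by auto
  then show "finite Q" .
  fix I J assume I: "I \<subseteq> Q" and J: "J \<subseteq> Q"
  have fI: "finite I" and fJ: "finite J" using I J fQ finite_subset by auto
  have "(\<Sum>i\<in>I. \<Sum>j\<in>J. B i j) = (\<Sum>i\<in>I. \<Sum>j\<in>J. 4 * (B i j * EE X (1/2) (\<lambda>S. of_bool (i \<in> S \<and> j \<notin> S))))"
  proof (intro sum.cong refl)
    fix i j assume "i \<in> I" "j \<in> J"
    then have "i \<in> X" "j \<in> X" using I J Q by auto
    then show "B i j = 4 * (B i j * EE X (1/2) (\<lambda>S. of_bool (i \<in> S \<and> j \<notin> S)))"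
      using diag0 prob_pair[OF X] by (cases "i = j") auto
  qed
  also have "\<dots> = 4 * EE X (1/2) (\<lambda>S. \<Sum>i\<in>I. \<Sum>j\<in>J. B i j * of_bool (i \<in> S \<and> j \<notin> S))"
    by (simp add: EE_sum EE_cmult sum_distrib_left mult.commute)
  finally have eq: "(\<Sum>i\<in>I. \<Sum>j\<in>J. B i j) = 4 * EE X (1/2) (\<lambda>S. \<Sum>i\<in>I. \<Sum>j\<in>J. B i j * of_bool (i \<in> S \<and> j \<notin> S))" .
  have pt: "\<bar>\<Sum>i\<in>I. \<Sum>j\<in>J. B i j * of_bool (i \<in> S \<and> j \<notin> S)\<bar> \<le> cutr (S \<inter> Q) (Q - S) B" for S
  proof -
    have "(\<Sum>i\<in>I. \<Sum>j\<in>J. B i j * of_bool (i \<in> S \<and> j \<notin> S)) = (\<Sum>i\<in>I \<inter> S. \<Sum>j\<in>J - S. B i j)"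
    proof -
      have "(\<Sum>i\<in>I. \<Sum>j\<in>J. B i j * of_bool (i \<in> S \<and> j \<notin> S)) = (\<Sum>i\<in>I. if i \<in> S then (\<Sum>j\<in>J. if j \<notin> S then B i j else 0) else 0)"
        by (intro sum.cong refl) (auto intro!: sum.cong)
      also have "\<dots> = (\<Sum>i\<in>I \<inter> S. (\<Sum>j\<in>J. if j \<notin> S then B i j else 0))"
        using fI by (simp add: sum.inter_restrict)
      also have "\<dots> = (\<Sum>i\<in>I \<inter> S. \<Sum>j\<in>J - S. B i j)"
      proof -
        have inner: "(\<Sum>j\<in>J. if j \<notin> S then B i j else 0) = (\<Sum>j\<in>J - S. B i j)" for i
          using fJ by (simp add: sum.inter_restrict Diff_eq)
        show ?thesis by (simp only: inner)
      qed
      finally show ?thesis .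
    qed
    also have "\<bar>\<dots>\<bar> \<le> cutr (S \<inter> Q) (Q - S) B"
      using I J fQ by (intro cutr_ge) auto
    finally show ?thesis .
  qed
  have "\<bar>\<Sum>i\<in>I. \<Sum>j\<in>J. B i j\<bar> = 4 * \<bar>EE X (1/2) (\<lambda>S. \<Sum>i\<in>I. \<Sum>j\<in>J. B i j * of_bool (i \<in> S \<and> j \<notin> S))\<bar>"
    unfolding eq by simp
  also have "\<dots> \<le> 4 * EE X (1/2) (\<lambda>S. \<bar>\<Sum>i\<in>I. \<Sum>j\<in>J. B i j * of_bool (i \<in> S \<and> j \<notin> S)\<bar>)"
    using EE_abs[of "1/2"] by simp
  also have "\<dots> \<le> 4 * EE X (1/2) (\<lambda>S. cutr (S \<inter> Q) (Q - S) B)"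
    using pt by (simp add: EE_mono)
  finally show "\<bar>\<Sum>i\<in>I. \<Sum>j\<in>J. B i j\<bar> \<le> 4 * EE X (1/2) (\<lambda>S. cutr (S \<inter> Q) (Q - S) B)" .
qed

lemma diag_upper:
  assumes "finite Q"
  shows "cutr Q Q (diag_part A) \<le> (\<Sum>i\<in>Q. \<bar>A i i\<bar>)"
proof (rule cutr_le[OF assms assms])
  fix I J assume I: "I \<subseteq> Q" and J: "J \<subseteq> Q"
  have fI: "finite I" and fJ: "finite J" using I J assms finite_subset by auto
  have "(\<Sum>i\<in>I. \<Sum>j\<in>J. diag_part A i j) = (\<Sum>i\<in>I. if i \<in> J then A i i else 0)"
    unfolding diag_part_def using fJ by (intro sum.cong refl) simp
  also have "\<dots> = (\<Sum>i\<in>I \<inter> J. A i i)" using fI by (simp add: sum.inter_restrict)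
  finally have "\<bar>\<Sum>i\<in>I. \<Sum>j\<in>J. diag_part A i j\<bar> \<le> (\<Sum>i\<in>I \<inter> J. \<bar>A i i\<bar>)"
    by (simp add: sum_abs)
  also have "\<dots> \<le> (\<Sum>i\<in>Q. \<bar>A i i\<bar>)" using I assms by (intro sum_mono2) auto
  finally show "\<bar>\<Sum>i\<in>I. \<Sum>j\<in>J. diag_part A i j\<bar> \<le> (\<Sum>i\<in>Q. \<bar>A i i\<bar>)" .
qed

lemma diag_lower:
  assumes X: "finite X"
  shows "(\<Sum>i\<in>X. \<bar>A i i\<bar>) \<le> 2 * cutr X X (diag_part A)"
proof -
  have d: "(\<Sum>i\<in>I. \<Sum>j\<in>I. diag_part A i j) = (\<Sum>i\<in>I. A i i)" if "finite I" for I
    unfolding diag_part_def using that by (intro sum.cong refl) simp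
  define P where "P = {i\<in>X. 0 \<le> A i i}"
  define N where "N = {i\<in>X. \<not> 0 \<le> A i i}"
  have fP: "finite P" "finite N" using X by (auto simp: P_def N_def)
  have PN: "X = P \<union> N" "P \<inter> N = {}" by (auto simp: P_def N_def)
  have "(\<Sum>i\<in>X. \<bar>A i i\<bar>) = (\<Sum>i\<in>P. \<bar>A i i\<bar>) + (\<Sum>i\<in>N. \<bar>A i i\<bar>)"
    using fP PN by (simp add: sum.union_disjoint)
  also have "(\<Sum>i\<in>P. \<bar>A i i\<bar>) = \<bar>\<Sum>i\<in>P. \<Sum>j\<in>P. diag_part A i j\<bar>"
  proof -
    have "(\<Sum>i\<in>P. \<bar>A i i\<bar>) = (\<Sum>i\<in>P. A i i)" by (intro sum.cong refl) (auto simp: P_def)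
    also have "\<dots> = \<bar>\<Sum>i\<in>P. A i i\<bar>" by (intro abs_of_nonneg[symmetric] sum_nonneg) (auto simp: P_def)
    finally show ?thesis using d[OF fP(1)] by simp
  qed
  also have "(\<Sum>i\<in>N. \<bar>A i i\<bar>) = \<bar>\<Sum>i\<in>N. \<Sum>j\<in>N. diag_part A i j\<bar>"
  proof -
    have "(\<Sum>i\<in>N. \<bar>A i i\<bar>) = - (\<Sum>i\<in>N. A i i)" by (simp add: sum_negf[symmetric]) (intro sum.cong refl, auto simp: N_def)
    also have "\<dots> = \<bar>\<Sum>i\<in>N. A i i\<bar>" by (intro abs_of_nonpos[symmetric] sum_nonpos) (auto simp: N_def)
    finally show ?thesis using d[OF fP(2)] by simp
  qed
  also have "\<bar>\<Sum>i\<in>P. \<Sum>j\<in>P. diag_part A i j\<bar> + \<bar>\<Sum>i\<in>N. \<Sum>j\<in>N. diag_part A i j\<bar> \<le> cutr X X (diag_part A) + cutr X X (diag_part A)"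
    using X by (intro add_mono cutr_ge) (auto simp: P_def N_def)
  finally show ?thesis by simp
qed



lemma norm_cmp:
  assumes X: "finite X" and "S' \<subseteq> X" "T' \<subseteq> X" and FH: "\<And>a b. (F a b)\<^sup>2 \<le> (H a b)\<^sup>2"
  shows "(\<Sum>a\<in>S'. sqrt (\<Sum>b\<in>T'. (F a b)\<^sup>2)) \<le> (\<Sum>a\<in>X. sqrt (\<Sum>b\<in>X. (H a b :: real)\<^sup>2))"
proof -
  have "(\<Sum>a\<in>S'. sqrt (\<Sum>b\<in>T'. (F a b)\<^sup>2)) \<le> (\<Sum>a\<in>S'. sqrt (\<Sum>b\<in>X. (H a b)\<^sup>2))"
  proof (intro sum_mono real_sqrt_le_mono)
    fix a
    have "(\<Sum>b\<in>T'. (F a b)\<^sup>2) \<le> (\<Sum>b\<in>T'. (H a b)\<^sup>2)" using FH by (intro sum_mono) auto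
    also have "\<dots> \<le> (\<Sum>b\<in>X. (H a b)\<^sup>2)" using assms by (intro sum_mono2) auto
    finally show "(\<Sum>b\<in>T'. (F a b)\<^sup>2) \<le> (\<Sum>b\<in>X. (H a b)\<^sup>2)" .
  qed
  also have "\<dots> \<le> (\<Sum>a\<in>X. sqrt (\<Sum>b\<in>X. (H a b)\<^sup>2))" using assms by (intro sum_mono2) (auto intro!: sum_nonneg)
  finally show ?thesis .
qed

theorem theorem1p2:
  shows "\<exists>C>0. \<forall>(n::nat) (A::nat \<Rightarrow> nat \<Rightarrow> real) (q::real).
    0 < q \<and> q \<le> real n \<longrightarrow>
    random_subset_expect n (q / real n) (\<lambda>Q. cut_norm Q A)
      \<le> C * ((q / real n)\<^sup>2 * cut_norm {1..n} (\<lambda>i j. A i j - diag_part A i j)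
             + (q / real n) * cut_norm {1..n} (diag_part A)
             + (q / real n) powr (3/2) * (col_norm n A + col_norm n (transp_mat A)))"
proof (intro exI[of _ 32] conjI allI impI)
  show "(0::real) < 32" by simp
  fix n :: nat and A :: "nat \<Rightarrow> nat \<Rightarrow> real" and q :: real
  assume qn: "0 < q \<and> q \<le> real n"
  define X where "X = {1..n}"
  define p where "p = q / real n"
  define B where "B = (\<lambda>i j. A i j - diag_part A i j)"
  define D where "D = diag_part A"
  have X: "finite X" unfolding X_def by simp
  have npos: "real n > 0" using qn by linarith
  have p: "0 < p" "p \<le> 1" using qn npos unfolding p_def by (auto simp: field_simps)
  have p': "0 \<le> p" "p \<le> 1" using p by auto
  have B0: "B i i = 0" for i unfolding B_def diag_part_def by simp
  have BA: "(B i j)\<^sup>2 \<le> (A i j)\<^sup>2" for i j unfolding B_def diag_part_def by simp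
  define Col where "Col = col_norm n A"
  define Row where "Row = col_norm n (transp_mat A)"
  have Col_def': "Col = (\<Sum>a\<in>X. sqrt (\<Sum>b\<in>X. ((\<lambda>j i. A i j) a b)\<^sup>2))"
    unfolding Col_def col_norm_def X_def by simp
  have Row_def': "Row = (\<Sum>a\<in>X. sqrt (\<Sum>b\<in>X. (A a b)\<^sup>2))"
    unfolding Row_def col_norm_def X_def transp_mat_def by simp
  have Colnn: "0 \<le> Col" "0 \<le> Row" unfolding Col_def' Row_def' by (auto intro!: sum_nonneg)
  have cutB: "0 \<le> cutr X X B" and cutD: "0 \<le> cutr X X D" using X by (auto intro: cutr_nonneg)
  define Bd where "Bd = 4 * p\<^sup>2 * cutr X X B + 8 * (p * sqrt p) * (Col + Row)"
  have rse: "random_subset_expect n (q / real n) (\<lambda>Q. cut_norm Q A) = EE X p (\<lambda>Q. cut_norm Q A)"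
    unfolding random_subset_expect_def EE_def X_def p_def by simp
  have split: "cut_norm Q A \<le> cutr Q Q B + cutr Q Q D" if "Q \<subseteq> X" for Q
  proof -
    have fQ: "finite Q" using that X finite_subset by auto
    show ?thesis unfolding cut_norm_cutr
    proof (rule cutr_le[OF fQ fQ])
      fix I J assume "I \<subseteq> Q" "J \<subseteq> Q"
      have "(\<Sum>i\<in>I. \<Sum>j\<in>J. A i j) = (\<Sum>i\<in>I. \<Sum>j\<in>J. B i j) + (\<Sum>i\<in>I. \<Sum>j\<in>J. D i j)"
        unfolding B_def D_def by (simp add: sum.distrib[symmetric])
      also have "\<bar>\<dots>\<bar> \<le> \<bar>\<Sum>i\<in>I. \<Sum>j\<in>J. B i j\<bar> + \<bar>\<Sum>i\<in>I. \<Sum>j\<in>J. D i j\<bar>" by (rule abs_triangle_ineq)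
      also have "\<dots> \<le> cutr Q Q B + cutr Q Q D" using \<open>I \<subseteq> Q\<close> \<open>J \<subseteq> Q\<close> fQ by (intro add_mono cutr_ge) auto
      finally show "\<bar>\<Sum>i\<in>I. \<Sum>j\<in>J. A i j\<bar> \<le> cutr Q Q B + cutr Q Q D" .
    qed
  qed
  have diagE: "EE X p (\<lambda>Q. cutr Q Q D) \<le> 2 * p * cutr X X D"
  proof -
    have "EE X p (\<lambda>Q. cutr Q Q D) \<le> EE X p (\<lambda>Q. \<Sum>i\<in>Q. \<bar>A i i\<bar>)"
      unfolding D_def using p' X by (intro EE_mono diag_upper) (auto intro: finite_subset)
    also have "\<dots> = p * (\<Sum>i\<in>X. \<bar>A i i\<bar>)" by (rule EE_sum_card[OF X])
    also have "\<dots> \<le> p * (2 * cutr X X D)" unfolding D_def using p' diag_lower[OF X] by (intro mult_left_mono) auto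
    finally show ?thesis by simp
  qed
  have fixS: "EE X p (\<lambda>Q. cutr (S \<inter> Q) (Q - S) B) \<le> Bd" if S: "S \<subseteq> X" for S
  proof -
    have fS: "finite S" "finite (X - S)" using S X finite_subset by auto
    have XS: "X = S \<union> (X - S)" using S by auto
    have "EE X p (\<lambda>Q. cutr (S \<inter> Q) (Q - S) B) = EE (S \<union> (X - S)) p (\<lambda>Q. cutr (Q \<inter> S) (Q \<inter> (X - S)) B)"
    proof -
      have "EE X p (\<lambda>Q. cutr (S \<inter> Q) (Q - S) B) = EE X p (\<lambda>Q. cutr (Q \<inter> S) (Q \<inter> (X - S)) B)"
      proof (rule EE_cong)
        fix Q assume "Q \<subseteq> X"
        then have "S \<inter> Q = Q \<inter> S" "Q - S = Q \<inter> (X - S)" by auto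
        then show "cutr (S \<inter> Q) (Q - S) B = cutr (Q \<inter> S) (Q \<inter> (X - S)) B" by simp
      qed
      then show ?thesis using XS by simp
    qed
    also have "\<dots> \<le> 4 * p\<^sup>2 * cutr S (X - S) B
      + 8 * (p * sqrt p) * (\<Sum>i\<in>S. sqrt (\<Sum>j\<in>X - S. (B i j)\<^sup>2)) + 4 * (p * sqrt p) * (\<Sum>j\<in>X - S. sqrt (\<Sum>i\<in>S. (B i j)\<^sup>2))"
      by (rule bipartite[OF fS]) (use p' in auto)
    also have "\<dots> \<le> Bd"
    proof -
      have pp: "0 \<le> p * sqrt p" "0 \<le> p\<^sup>2" using p' by auto
      have c1: "cutr S (X - S) B \<le> cutr X X B" using X S by (intro cutr_mono) auto
      have c2: "(\<Sum>i\<in>S. sqrt (\<Sum>j\<in>X - S. (B i j)\<^sup>2)) \<le> Row"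
        unfolding Row_def' using X S BA by (intro norm_cmp) auto
      have c3: "(\<Sum>j\<in>X - S. sqrt (\<Sum>i\<in>S. (B i j)\<^sup>2)) \<le> Col"
        unfolding Col_def' using X S BA by (intro norm_cmp[where F="\<lambda>j i. B i j"]) auto
      have "4 * p\<^sup>2 * cutr S (X - S) B \<le> 4 * p\<^sup>2 * cutr X X B" using c1 pp by (intro mult_left_mono) auto
      moreover have "8 * (p * sqrt p) * (\<Sum>i\<in>S. sqrt (\<Sum>j\<in>X - S. (B i j)\<^sup>2)) \<le> 8 * (p * sqrt p) * Row"
        using c2 pp by (intro mult_left_mono) auto
      moreover have "4 * (p * sqrt p) * (\<Sum>j\<in>X - S. sqrt (\<Sum>i\<in>S. (B i j)\<^sup>2)) \<le> 8 * (p * sqrt p) * Col"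
      proof -
        have "4 * (p * sqrt p) * (\<Sum>j\<in>X - S. sqrt (\<Sum>i\<in>S. (B i j)\<^sup>2)) \<le> 4 * (p * sqrt p) * Col"
          using c3 pp by (intro mult_left_mono) auto
        also have "\<dots> \<le> 8 * (p * sqrt p) * Col" using pp Colnn by (intro mult_right_mono) auto
        finally show ?thesis .
      qed
      ultimately show ?thesis unfolding Bd_def by (simp add: algebra_simps)
    qed
    finally show ?thesis .
  qed
  have offE: "EE X p (\<lambda>Q. cutr Q Q B) \<le> 4 * Bd"
  proof -
    have "EE X p (\<lambda>Q. cutr Q Q B) \<le> EE X p (\<lambda>Q. 4 * EE X (1/2) (\<lambda>S. cutr (S \<inter> Q) (Q - S) B))"
      using p' X B0 by (intro EE_mono decouple) auto
    also have "\<dots> = 4 * EE X (1/2) (\<lambda>S. EE X p (\<lambda>Q. cutr (S \<inter> Q) (Q - S) B))"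
      using EE_swap[where X=X and p=p and Y=X and r="1/2" and f="\<lambda>Q S. cutr (S \<inter> Q) (Q - S) B"] by (simp only: EE_cmult)
    also have "\<dots> \<le> 4 * EE X (1/2) (\<lambda>S. Bd)"
      using fixS by (intro mult_left_mono EE_mono) auto
    also have "\<dots> = 4 * Bd" using X by (simp add: EE_const)
    finally show ?thesis .
  qed
  have powr: "p powr (3/2) = p * sqrt p"
  proof -
    have "p powr (3/2) = p powr (1 + 1/2)" by simp
    also have "\<dots> = p powr 1 * p powr (1/2)" using p by (simp only: powr_add)
    also have "\<dots> = p * sqrt p" using p by (simp add: powr_half_sqrt)
    finally show ?thesis .
  qed
  have "EE X p (\<lambda>Q. cut_norm Q A) \<le> EE X p (\<lambda>Q. cutr Q Q B + cutr Q Q D)"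
    using p' split by (intro EE_mono) auto
  also have "\<dots> = EE X p (\<lambda>Q. cutr Q Q B) + EE X p (\<lambda>Q. cutr Q Q D)" by (rule EE_add)
  also have "\<dots> \<le> 4 * Bd + 2 * p * cutr X X D" using offE diagE by simp
  also have "\<dots> \<le> 32 * (p\<^sup>2 * cutr X X B + p * cutr X X D + (p * sqrt p) * (Col + Row))"
    unfolding Bd_def using cutB cutD Colnn p' by (simp add: algebra_simps)
  finally show "random_subset_expect n (q / real n) (\<lambda>Q. cut_norm Q A)
      \<le> 32 * ((q / real n)\<^sup>2 * cut_norm {1..n} (\<lambda>i j. A i j - diag_part A i j)
             + (q / real n) * cut_norm {1..n} (diag_part A)
             + (q / real n) powr (3/2) * (col_norm n A + col_norm n (transp_mat A)))"
    unfolding rse powr[unfolded p_def]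
    by (simp add: X_def p_def B_def D_def Col_def Row_def cut_norm_cutr)
qed

end
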